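(* Let $a,b\in\mathbb F_{q^2}^*$, let $j_1,i_2,j_2$ be integers with $0<j_1<d$, $0<i_2<(q+1)/d$, $0\le j_2<d$, and assume $1+a\epsilon^{j_1k}\ne0$ for all $0\le k<d$. For $0\le k<d$ put $L_k(X)=1+a\epsilon^{j_1k}+b\epsilon^{j_2k}X^{i_2}$. (i) If for some $0\le k<d$ there is $\lambda_k\in\mu_{q+1}$ with $L_k\in\mathcal L_k(i_2,0;\lambda_k)$, then $\lambda_k=(1+a\epsilon^{j_1k})^q/(b\epsilon^{j_2k})$, there is an integer $\alpha(k)$ with $\bigl((1+a^q\epsilon^{-j_1k})/b\bigr)^{(q+1)/d}=\epsilon^{\alpha(k)}$, and $\lambda_k^{(q+1)/d}=\epsilon^{-j_2k(q+1)/d+\alpha(k)}$. (ii) If for every $0\le k<d$ there is $\lambda_k\in\mu_{q+1}$ with $L_k\in\mathcal L_k(i_2,0;\lambda_k)$, then $d$ is even, $j_1=d/2$, $a^{q-1}=-1$ and $(1-a)/b\in\mu_{q+1}$; moreover $((1+a)/(1-a))^{q+1}=1$, and if $u,v\in\mathbb Z/d\mathbb Z$ are defined by $((1-a)/b)^{(q+1)/d}=\epsilon^u$ and $((1+a)/(1-a))^{(q+1)/d}=\epsilon^v$, and $\pi(k)\in\mathbb Z/d\mathbb Z$ by $\lambda_k^{(q+1)/d}=\epsilon^{\pi(k)}$, then for all $k\in\mathbb Z/d\mathbb Z$ $$\pi(k)+(r-i_2)k=\Bigl(-j_2\frac{q+1}{d}+r-i_2\Bigr)k+\delta(k)v+u,$$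 for every integer $r$, where $\delta(k)=0$ if $k$ is even and $\delta(k)=1$ if $k$ is odd.
   Context: $q$ is a prime power, $d$ is a positive divisor of $q+1$, and $\epsilon\in\mathbb F_{q^2}^*$ has multiplicative order $d$. $\mu_{q+1}$ is the subgroup of order $q+1$ of $\mathbb F_{q^2}^*$. For $a\in\mathbb F_{q^2}$, $\bar a=a^q$; for $f(X)=\sum_{i=0}^n a_iX^i\in\mathbb F_{q^2}[X]$ with $a_n\neq0$, $\tilde f(X)=\sum_{i=0}^n\bar a_iX^{n-i}$. For $0\le k<d$, $0\le t<(q+1)/d$ and $\lambda\in\mu_{q+1}$, $\mathcal L_k(t,0;\lambda)$ is the set of $L\in\mathbb F_{q^2}[X]$ with $\deg L=t$, $\tilde L=\lambda L$ and $\gcd(L,X^{(q+1)/d}-\epsilon^k)=1$. *)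

theory Defs
  imports "HOL-Library.Cardinality" "HOL-Computational_Algebra.Polynomial" "HOL-Computational_Algebra.Polynomial_Factorial"
begin

definition tilde_poly :: "nat \<Rightarrow> 'a::field poly \<Rightarrow> 'a poly" where
  "tilde_poly q f = (\<Sum>i\<le>degree f. monom (coeff f i ^ q) (degree f - i))"

text \<open>The subgroup mu_(q+1) of F_(q^2)^*.\<close>
definition mu :: "nat \<Rightarrow> 'a::field set" where
  "mu q = {x. x ^ (q + 1) = 1}"

definition has_mult_order :: "'a::field \<Rightarrow> nat \<Rightarrow> bool" where
  "has_mult_order e d \<longleftrightarrow> 0 < d \<and> e ^ d = 1 \<and> (\<forall>m. 0 < m \<and> m < d \<longrightarrow> e ^ m \<noteq> 1)"

definition Lset :: "nat \<Rightarrow> nat \<Rightarrow> 'a::field_gcd \<Rightarrow> nat \<Rightarrow> nat \<Rightarrow> 'a \<Rightarrow> 'a poly set" where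
  "Lset q d e k t lam = {L. degree L = t \<and> L \<noteq> 0 \<and> tilde_poly q L = smult lam L \<and>
      gcd L (monom 1 ((q + 1) div d) - [:e ^ k:]) = 1}"

end

theory Submission
  imports Defs
begin


lemma char_dvd_card:
  shows "CHAR('a::{field,finite}) dvd CARD('a)"
proof -
  define c where "c = CHAR('a)"
  have cpos: "c > 0" unfolding c_def by (rule finite_imp_CHAR_pos) simp
  have red: "(of_nat n :: 'a) = of_nat (n mod c)" for n
  proof -
    have "(of_nat n :: 'a) = of_nat (c * (n div c) + n mod c)" by simp
    also have "\<dots> = of_nat c * of_nat (n div c) + of_nat (n mod c)" by (simp only: of_nat_add of_nat_mult)
    also have "\<dots> = of_nat (n mod c)" by (simp add: c_def)
    finally show ?thesis .
  qed
  define cls where "cls x = (\<lambda>n. x + of_nat n) ` {..<c}" for x :: 'a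
  have mem: "y + of_nat m \<in> cls y" for y m
    using red[of m] cpos unfolding cls_def by auto
  have neg: "- (of_nat i :: 'a) = of_nat ((c - 1) * i)" for i
  proof -
    have "(of_nat ((c - 1) * i) :: 'a) + of_nat i = of_nat (c * i)"
      using cpos by (simp add: algebra_simps flip: of_nat_add)
    also have "\<dots> = 0" by (simp add: c_def)
    finally have "(of_nat ((c - 1) * i) :: 'a) + of_nat i = 0" .
    thus ?thesis by (metis add.commute neg_eq_iff_add_eq_0)
  qed
  have inj: "inj_on (\<lambda>n. x + (of_nat n :: 'a)) {..<c}" for x
  proof (rule inj_onI)
    fix i j assume ij: "i \<in> {..<c}" "j \<in> {..<c}" "x + (of_nat i :: 'a) = x + of_nat j"
    hence e: "(of_nat i :: 'a) = of_nat j" by simp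
    show "i = j"
    proof (rule ccontr)
      assume "i \<noteq> j"
      then consider "i < j" | "j < i" by linarith
      thus False
      proof cases
        case 1
        hence "c dvd j - i" using e of_nat_eq_iff_char_dvd[of i j, where 'a='a] by (simp add: c_def)
        thus False using 1 ij by (meson lessThan_iff less_imp_diff_less nat_dvd_not_less zero_less_diff)
      next
        case 2
        hence "c dvd i - j" using e of_nat_eq_iff_char_dvd[of j i, where 'a='a] by (simp add: c_def)
        thus False using 2 ij by (meson lessThan_iff less_imp_diff_less nat_dvd_not_less zero_less_diff)
      qed
    qed
  qed
  have ccard: "card (cls x) = c" for x unfolding cls_def by (simp add: card_image[OF inj])
  have sub: "cls x \<subseteq> cls y" if zx: "z \<in> cls x" and zy: "z \<in> cls y" for x y z
  proof
    fix w assume "w \<in> cls x"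
    then obtain n where w: "w = x + of_nat n" unfolding cls_def by auto
    obtain i where i: "z = x + of_nat i" using zx unfolding cls_def by auto
    obtain j where j: "z = y + of_nat j" using zy unfolding cls_def by auto
    have "x = y + of_nat j - of_nat i" using i j by (simp add: eq_diff_eq)
    also have "\<dots> = y + of_nat j + of_nat ((c - 1) * i)" by (simp only: diff_conv_add_uminus neg)
    finally have "w = y + of_nat j + of_nat ((c - 1) * i) + of_nat n"
      using w by simp
    also have "\<dots> = y + of_nat (j + (c - 1) * i + n)" by (simp only: of_nat_add add.assoc)
    finally show "w \<in> cls y" using mem by metis
  qed
  let ?C = "range cls"
  have U: "\<Union>?C = UNIV" using mem[of _ 0] by auto
  have "c * card ?C = card (\<Union>?C)"
    by (rule card_partition) (auto simp: ccard dest: sub)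
  thus ?thesis using U unfolding c_def by (metis dvd_triv_left)
qed

lemma frob_add:
  fixes x y :: "'a::{field,finite}"
  assumes "prime p" "0 < m" "q = p ^ m" "CARD('a) = q ^ 2"
  shows "(x + y) ^ q = x ^ q + y ^ q"
proof -
  have pos: "CHAR('a) > 0" by (rule finite_imp_CHAR_pos) simp
  have pr: "prime CHAR('a)" by (rule prime_CHAR_semidom[OF pos])
  have "CHAR('a) dvd p ^ (2*m)" using char_dvd_card[where 'a='a] assms
    by (simp add: power_mult_distrib flip: power_mult) (simp add: mult.commute power_mult)
  hence "CHAR('a) dvd p" using pr prime_dvd_power by blast
  hence "CHAR('a) = p" using pr assms(1) by (simp add: primes_dvd_imp_eq)
  thus ?thesis using freshmans_dream'[OF pr, of q m] assms by simp
qed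

lemma ord_pow_eq1:
  fixes e :: "'a::field"
  assumes "has_mult_order e d" "e ^ n = 1"
  shows "d dvd n"
proof -
  have "e ^ n = e ^ (d * (n div d) + n mod d)" by simp
  also have "\<dots> = (e ^ d) ^ (n div d) * e ^ (n mod d)" by (simp only: power_add power_mult)
  finally have "e ^ n = (e ^ d) ^ (n div d) * e ^ (n mod d)" .
  hence "e ^ (n mod d) = 1" using assms by (simp add: has_mult_order_def)
  moreover have "n mod d < d" using assms by (simp add: has_mult_order_def)
  ultimately have "n mod d = 0" using assms unfolding has_mult_order_def by auto
  thus ?thesis by (simp add: dvd_eq_mod_eq_0)
qed

lemma ord_inj:
  fixes e :: "'a::field"
  assumes "has_mult_order e d" "i < d" "j < d" "e ^ i = e ^ j"
  shows "i = j"
proof (rule ccontr)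
  have e0: "e \<noteq> 0" using assms(1) unfolding has_mult_order_def by (auto simp: power_0_left)
  assume "i \<noteq> j"
  moreover have "i < j \<Longrightarrow> False"
  proof -
    assume ij: "i < j"
    have "e ^ j = e ^ i * e ^ (j - i)" using ij by (simp flip: power_add)
    hence "e ^ (j - i) = 1" using assms(4) e0 by simp
    moreover have "d dvd (j - i)" using ord_pow_eq1[OF assms(1) calculation] .
    ultimately show False using ij assms(3) nat_dvd_not_less[of "j - i" d] by auto
  qed
  moreover have "j < i \<Longrightarrow> False"
  proof -
    assume ij: "j < i"
    have "e ^ i = e ^ j * e ^ (i - j)" using ij by (simp flip: power_add)
    hence "e ^ (i - j) = 1" using assms(4) e0 by simp
    moreover have "d dvd (i - j)" using ord_pow_eq1[OF assms(1) calculation] .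
    ultimately show False using ij assms(2) nat_dvd_not_less[of "i - j" d] by auto
  qed
  ultimately show False by linarith
qed

lemma root_is_power:
  fixes e x :: "'a::field"
  assumes "has_mult_order e d" "x ^ d = 1"
  shows "\<exists>i<d. x = e ^ i"
proof -
  define p where "p = monom (1::'a) d + [:-1:]"
  have d0: "0 < d" using assms unfolding has_mult_order_def by simp
  have pev: "poly p y = y ^ d - 1" for y by (simp add: p_def poly_monom)
  have "poly p 0 = - 1" using d0 by (simp add: pev power_0_left)
  hence p0: "p \<noteq> 0" by auto
  have degp: "degree p = d" using d0 unfolding p_def by (subst degree_add_eq_left) (auto simp: degree_monom_eq)
  define S where "S = (\<lambda>i. e ^ i) ` {..<d}"
  have cS: "card S = d" unfolding S_def
    by (subst card_image) (auto intro!: inj_onI ord_inj[OF assms(1)])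
  have "(e ^ i) ^ d = 1" for i using assms(1) unfolding has_mult_order_def
    by (metis power_mult power_one mult.commute)
  hence sub: "S \<subseteq> {y. poly p y = 0}" unfolding S_def pev by auto
  have fin: "finite {y. poly p y = 0}" using poly_roots_finite[OF p0] .
  have "card {y. poly p y = 0} \<le> d" using card_poly_roots_bound[OF p0] degp by simp
  hence "S = {y. poly p y = 0}" using card_subset_eq[OF fin sub] cS card_mono[OF fin sub] by simp
  moreover have "x \<in> {y. poly p y = 0}" using assms(2) pev by simp
  ultimately show ?thesis unfolding S_def by auto
qed

lemma coeff_tilde:
  assumes "n \<le> degree f"
  shows "coeff (tilde_poly q f) n = coeff f (degree f - n) ^ q"
proof -
  have "coeff (tilde_poly q f) n = (\<Sum>i\<le>degree f. if i = degree f - n then coeff f i ^ q else 0)"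
    unfolding tilde_poly_def coeff_sum coeff_monom
    by (rule sum.cong) (use assms in auto)
  also have "\<dots> = coeff f (degree f - n) ^ q" by (simp add: sum.delta)
  finally show ?thesis .
qed

lemma tilde_coeffs:
  assumes "degree L = t" "0 < t" "tilde_poly q L = smult lam L"
  shows "coeff L t ^ q = lam * coeff L 0 \<and> coeff L 0 ^ q = lam * coeff L t"
proof -
  have "coeff (tilde_poly q L) 0 = coeff L t ^ q" using coeff_tilde[of 0 L q] assms by simp
  moreover have "coeff (tilde_poly q L) t = coeff L 0 ^ q" using coeff_tilde[of t L q] assms by simp
  ultimately show ?thesis using assms(3) by simp
qed

lemma powi_mod:
  fixes e :: "'a::field"
  assumes "has_mult_order e d"
  shows "e powi x = e powi (x mod int d)"
proof -
  have e0: "e \<noteq> 0" using assms unfolding has_mult_order_def by (metis power_0_left zero_neq_one neq0_conv)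
  have "e powi x = e powi (int d * (x div int d) + x mod int d)" by simp
  also have "\<dots> = e powi (int d * (x div int d)) * e powi (x mod int d)"
    using e0 by (rule power_int_add[OF disjI1])
  finally have h1: "e powi x = e powi (int d * (x div int d)) * e powi (x mod int d)" .
  have "e powi (int d * (x div int d)) = 1" using assms
    by (simp only: power_int_mult power_int_of_nat) (simp add: has_mult_order_def)
  thus ?thesis using h1 by simp
qed

lemma powi_eq_mod:
  fixes e :: "'a::field"
  assumes "has_mult_order e d" "e powi x = e powi y"
  shows "x mod int d = y mod int d"
proof -
  have d0: "0 < d" using assms unfolding has_mult_order_def by simp
  have "e powi (x mod int d) = e powi (y mod int d)" using assms powi_mod by metis
  moreover have "x mod int d = int (nat (x mod int d))" "y mod int d = int (nat (y mod int d))"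
    using d0 by simp_all
  ultimately have "e ^ nat (x mod int d) = e ^ nat (y mod int d)" by (metis power_int_of_nat)
  moreover have "nat (x mod int d) < d" "nat (y mod int d) < d" using d0 by (simp_all add: nat_less_iff)
  ultimately have "nat (x mod int d) = nat (y mod int d)" using ord_inj[OF assms(1)] by blast
  thus ?thesis using d0 by (metis \<open>x mod int d = _\<close> \<open>y mod int d = _\<close>)
qed



theorem lemma4p1:
  fixes q d :: nat and e a b :: "'a::{field_gcd,finite}" and j1 i2 j2 :: nat
  defines "N \<equiv> (q + 1) div d"
  defines "Lk \<equiv> (\<lambda>k::nat. [:1 + a * e ^ (j1 * k):] + monom (b * e ^ (j2 * k)) i2)"
  assumes q_pp: "\<exists>p m. prime p \<and> 0 < m \<and> q = p ^ m"
    and card: "CARD('a) = q ^ 2"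
    and d_dvd: "d dvd q + 1"
    and e_ord: "has_mult_order e d"
    and a_nz: "a \<noteq> 0" and b_nz: "b \<noteq> 0"
    and j1: "0 < j1" "j1 < d"
    and i2: "0 < i2" "i2 < N"
    and j2: "j2 < d"
    and nz: "\<forall>k<d. 1 + a * e ^ (j1 * k) \<noteq> 0"
  shows
   "(\<forall>k<d. \<forall>lam. lam \<in> mu q \<and> Lk k \<in> Lset q d e k i2 lam \<longrightarrow>
        lam = (1 + a * e ^ (j1 * k)) ^ q / (b * e ^ (j2 * k)) \<and>
        (\<exists>\<alpha>::int. ((1 + a ^ q * e powi (- int (j1 * k))) / b) ^ N = e powi \<alpha> \<and>
                   lam ^ N = e powi (- int (j2 * k * N) + \<alpha>)))
    \<and>
    (\<forall>lam::nat \<Rightarrow> 'a. (\<forall>k<d. lam k \<in> mu q \<and> Lk k \<in> Lset q d e k i2 (lam k)) \<longrightarrow>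
        even d \<and> j1 = d div 2 \<and> a ^ (q - 1) = -1 \<and> (1 - a) / b \<in> mu q \<and>
        ((1 + a) / (1 - a)) ^ (q + 1) = 1 \<and>
        (\<forall>(u::int) (v::int) (\<pi>::nat \<Rightarrow> int).
            ((1 - a) / b) ^ N = e powi u \<longrightarrow>
            ((1 + a) / (1 - a)) ^ N = e powi v \<longrightarrow>
            (\<forall>k<d. lam k ^ N = e powi \<pi> k) \<longrightarrow>
            (\<forall>k<d. \<forall>r::int.
               (\<pi> k + (r - int i2) * int k) mod int d
                = ((- int j2 * int N + r - int i2) * int k + (if even k then 0 else 1) * v + u)
                  mod int d)))"

proof -
  obtain p m where pm: "prime p" "0 < m" "q = p ^ m" using q_pp by blast
  have frob: "(x + y) ^ q = x ^ q + y ^ q" for x y :: 'a using frob_add[OF pm card] .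
  have q0: "q > 0" using pm by (simp add: prime_gt_0_nat)
  have d0: "0 < d" and ed: "e ^ d = 1" using e_ord by (auto simp: has_mult_order_def)
  have e0: "e \<noteq> 0"
  proof
    assume "e = 0" thus False using ed d0 by (simp add: power_0_left)
  qed
  have Nd: "N * d = q + 1" using d_dvd unfolding N_def by simp
  have powq1: "(e ^ n) ^ (q + 1) = 1" for n
    by (metis ed Nd power_mult power_one mult.commute)
  have powq: "(e ^ n) ^ q = inverse (e ^ n)" for n
  proof -
    have "(e ^ n) ^ q * e ^ n = 1" using powq1[of n] by (metis power_Suc2 Suc_eq_plus1)
    thus ?thesis using e0 by (simp add: field_simps)
  qed
  have negq: "(- x) ^ q = - (x ^ q)" for x :: 'a
  proof -
    have "(x + - x) ^ q = x ^ q + (- x) ^ q" by (rule frob)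
    hence "x ^ q + (- x) ^ q = 0" using q0 by (simp add: power_0_left)
    thus ?thesis by (metis add_eq_0_iff)
  qed
  have Bnz: "b * e ^ (j2 * k) \<noteq> 0" for k using b_nz e0 by simp
  have cLk0: "coeff (Lk k) 0 = 1 + a * e ^ (j1 * k)" for k using i2 by (simp add: Lk_def coeff_monom)
  have cLki: "coeff (Lk k) i2 = b * e ^ (j2 * k)" for k using i2 by (cases i2) (simp_all add: Lk_def coeff_monom)
  have degLk: "degree (Lk k) = i2" for k
    unfolding Lk_def using i2 Bnz[of k] by (subst degree_add_eq_right) (auto simp: degree_monom_eq)
  have key: "(1 + a * e ^ (j1 * k)) ^ q = lam * (b * e ^ (j2 * k)) \<and>
             (b * e ^ (j2 * k)) ^ q = lam * (1 + a * e ^ (j1 * k))"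
    if "Lk k \<in> Lset q d e k i2 lam" for k lam
  proof -
    have "tilde_poly q (Lk k) = smult lam (Lk k)" using that by (simp add: Lset_def)
    from tilde_coeffs[OF degLk[of k] i2(1) this] show ?thesis by (simp add: cLk0 cLki)
  qed
  have cq: "(1 + a * e ^ (j1 * k)) ^ q = 1 + a ^ q * inverse (e ^ (j1 * k))" for k
    by (simp add: frob power_mult_distrib powq)
  have part1: "lam = (1 + a * e ^ (j1 * k)) ^ q / (b * e ^ (j2 * k)) \<and>
        (\<exists>\<alpha>::int. ((1 + a ^ q * e powi (- int (j1 * k))) / b) ^ N = e powi \<alpha> \<and>
                   lam ^ N = e powi (- int (j2 * k * N) + \<alpha>))"
    if lm: "lam \<in> mu q" and lL: "Lk k \<in> Lset q d e k i2 lam" for k lam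
  proof -
    have k1: "(1 + a * e ^ (j1 * k)) ^ q = lam * (b * e ^ (j2 * k))" using key[OF lL] by blast
    hence lam_eq: "lam = (1 + a * e ^ (j1 * k)) ^ q / (b * e ^ (j2 * k))" using Bnz[of k] by simp
    have "(lam ^ N) ^ d = 1" using lm Nd by (simp add: mu_def flip: power_mult)
    then obtain \<beta> where \<beta>: "\<beta> < d" "lam ^ N = e ^ \<beta>" using root_is_power[OF e_ord] by blast
    have "(1 + a ^ q * e powi (- int (j1 * k))) / b = (1 + a * e ^ (j1 * k)) ^ q / b"
      by (simp only: cq power_int_minus power_int_of_nat)
    also have "\<dots> = lam * e ^ (j2 * k)" using k1 b_nz by simp
    finally have "((1 + a ^ q * e powi (- int (j1 * k))) / b) ^ N = lam ^ N * e ^ (j2 * k * N)"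
      by (simp add: power_mult_distrib power_mult)
    also have "\<dots> = e powi int (\<beta> + j2 * k * N)" using \<beta> by (simp only: power_int_of_nat power_add)
    finally have "((1 + a ^ q * e powi (- int (j1 * k))) / b) ^ N = e powi int (\<beta> + j2 * k * N)" .
    moreover have "lam ^ N = e powi (- int (j2 * k * N) + int (\<beta> + j2 * k * N))"
    proof -
      have "- int (j2 * k * N) + int (\<beta> + j2 * k * N) = int \<beta>" by simp
      thus ?thesis using \<beta> by (simp only: power_int_of_nat)
    qed
    ultimately show ?thesis using lam_eq by blast
  qed
  show ?thesis
  proof (rule conjI)
    show "\<forall>k<d. \<forall>lam. lam \<in> mu q \<and> Lk k \<in> Lset q d e k i2 lam \<longrightarrow>
        lam = (1 + a * e ^ (j1 * k)) ^ q / (b * e ^ (j2 * k)) \<and>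
        (\<exists>\<alpha>::int. ((1 + a ^ q * e powi (- int (j1 * k))) / b) ^ N = e powi \<alpha> \<and>
                   lam ^ N = e powi (- int (j2 * k * N) + \<alpha>))"
      using part1 by blast
  next
    show "\<forall>lam::nat \<Rightarrow> 'a. (\<forall>k<d. lam k \<in> mu q \<and> Lk k \<in> Lset q d e k i2 (lam k)) \<longrightarrow>
        even d \<and> j1 = d div 2 \<and> a ^ (q - 1) = -1 \<and> (1 - a) / b \<in> mu q \<and>
        ((1 + a) / (1 - a)) ^ (q + 1) = 1 \<and>
        (\<forall>(u::int) (v::int) (\<pi>::nat \<Rightarrow> int).
            ((1 - a) / b) ^ N = e powi u \<longrightarrow>
            ((1 + a) / (1 - a)) ^ N = e powi v \<longrightarrow>
            (\<forall>k<d. lam k ^ N = e powi \<pi> k) \<longrightarrow>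
            (\<forall>k<d. \<forall>r::int.
               (\<pi> k + (r - int i2) * int k) mod int d
                = ((- int j2 * int N + r - int i2) * int k + (if even k then 0 else 1) * v + u)
                  mod int d))"
    proof (intro allI impI)
    fix lam :: "nat \<Rightarrow> 'a"
    assume H: "\<forall>k<d. lam k \<in> mu q \<and> Lk k \<in> Lset q d e k i2 (lam k)"
    have norm: "(1 + a * e ^ (j1 * k)) ^ (q + 1) = b ^ (q + 1)" if "k < d" for k
    proof -
      let ?C = "1 + a * e ^ (j1 * k)" and ?B = "b * e ^ (j2 * k)"
      have kk: "?C ^ q = lam k * ?B" "?B ^ q = lam k * ?C" using key H that by blast+
      have "?C ^ (q + 1) = ?B ^ (q + 1)" using kk by (simp add: power_Suc2 mult_ac)
      also have "\<dots> = b ^ (q + 1)" using powq1[of "j2 * k"] by (simp add: power_mult_distrib)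
      finally show ?thesis .
    qed
    have tr: "a * e ^ (j1 * k) + a ^ q * inverse (e ^ (j1 * k)) = a + a ^ q" if "k < d" for k
    proof -
      define E where "E = e ^ (j1 * k)"
      have E0: "E * inverse E = 1" using e0 by (simp add: E_def)
      have X1: "(1 + a ^ q * inverse E) * (1 + a * E) = b ^ (q + 1)"
        using norm[OF that] by (simp add: power_Suc2 cq mult.commute E_def)
      have X0: "(1 + a ^ q) * (1 + a) = b ^ (q + 1)"
        using norm[of 0] cq[of 0] d0 by (simp add: power_Suc2 mult.commute)
      have "(1 + a ^ q * inverse E) * (1 + a * E) = 1 + a * E + a ^ q * inverse E + a ^ q * a * (E * inverse E)"
        by (simp add: algebra_simps)
      also have "\<dots> = 1 + a * E + a ^ q * inverse E + a ^ q * a" using E0 by simp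
      finally have "1 + a * E + a ^ q * inverse E + a ^ q * a = (1 + a ^ q) * (1 + a)" using X1 X0 by simp
      also have "(1 + a ^ q) * (1 + a) = 1 + a + a ^ q + a ^ q * a" by (simp add: algebra_simps)
      finally show ?thesis unfolding E_def[symmetric] by (simp add: algebra_simps)
    qed
    define t where "t = e ^ j1"
    have d1: "1 < d" using j1 by simp
    have t0: "t \<noteq> 0" using e0 by (simp add: t_def)
    have t1: "t \<noteq> 1" using e_ord j1 unfolding t_def has_mult_order_def by blast
    have tr1: "a * t + a ^ q * inverse t = a + a ^ q" using tr[OF d1] by (simp add: t_def)
    have At: "a ^ q = a * t"
    proof -
      have "(t - 1) * (a * t - a ^ q) = 0" using tr1 t0 by (simp add: field_simps)
      thus ?thesis using t1 by simp
    qed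
    have tm1: "t = - 1"
    proof (cases "d = 2")
      case True
      hence "j1 = 1" using j1 by simp
      hence "t ^ 2 = 1" using ed True by (simp add: t_def)
      hence "(t - 1) * (t + 1) = 0" by (simp add: algebra_simps power2_eq_square)
      thus ?thesis using t1 by (simp add: eq_neg_iff_add_eq_0)
    next
      case False
      hence d2: "2 < d" using d1 by simp
      have F1: "a * t ^ 2 + a ^ q * inverse (t ^ 2) = a + a ^ q"
        using tr[OF d2] by (simp add: t_def power_mult mult.commute)
      have F2: "a ^ q * inverse (t ^ 2) = a * inverse t"
        using t0 by (simp add: At power2_eq_square)
      have "a * (t ^ 2 + inverse t) = a * t ^ 2 + a ^ q * inverse (t ^ 2)"
        by (simp only: distrib_left F2)
      also have "\<dots> = a + a ^ q" by (rule F1)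
      also have "\<dots> = a * (1 + t)" by (simp add: At distrib_left)
      finally have "a * (t ^ 2 + inverse t) = a * (1 + t)" .
      hence h: "t ^ 2 + inverse t = 1 + t" using a_nz by simp
      have ti: "t * inverse t = 1" using t0 by simp
      have "t ^ 3 + 1 = t * (t ^ 2 + inverse t)"
        using ti by (simp add: distrib_left power2_eq_square power3_eq_cube)
      also have "\<dots> = t + t ^ 2" using h by (simp add: distrib_left power2_eq_square)
      finally have h3: "t ^ 3 + 1 = t + t ^ 2" .
      have "(t - 1) * (t - 1) * (t + 1) = (t ^ 3 + 1) - (t + t ^ 2)"
        by (simp add: algebra_simps power2_eq_square power3_eq_cube)
      hence "(t - 1) * (t - 1) * (t + 1) = 0" using h3 by simp
      thus ?thesis using t1 by (simp add: eq_neg_iff_add_eq_0)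
    qed
    have "e ^ (2 * j1) = 1" using tm1 by (simp add: power_mult t_def[symmetric] mult.commute)
    hence "d dvd 2 * j1" by (rule ord_pow_eq1[OF e_ord])
    then obtain c where c: "2 * j1 = d * c" by blast
    have "c = 1"
    proof -
      have "c > 0" using c j1 by (cases c) auto
      moreover have "c < 2"
      proof (rule ccontr)
        assume "\<not> c < 2"
        hence "d * 2 \<le> d * c" by simp
        thus False using c j1 by linarith
      qed
      ultimately show ?thesis by simp
    qed
    hence dj: "d = 2 * j1" using c by simp
    have m1: "(- 1 :: 'a) \<noteq> 1" using t1 tm1 by simp
    have Aa: "a ^ q = - a" using At tm1 by simp
    have aq1: "a ^ (q - 1) = - 1"
    proof -
      have "a ^ (q - 1) * a = - a" using Aa q0 by (metis Suc_diff_1 power_Suc2)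
      hence "a * a ^ (q - 1) = a * (- 1)" by (simp add: mult.commute)
      thus ?thesis using a_nz by (simp only: mult_cancel_left) simp
    qed
    have n1: "(1 - a) ^ (q + 1) = b ^ (q + 1)" using norm[OF d1] tm1 by (simp add: t_def)
    have n0: "(1 + a) ^ (q + 1) = b ^ (q + 1)" using norm[of 0] d0 by simp
    have am1: "1 - a \<noteq> 0" using nz d1 tm1 by (auto simp: t_def)
    have mu1: "(1 - a) / b \<in> mu q" using n1 b_nz by (simp add: mu_def power_divide)
    have mu2: "((1 + a) / (1 - a)) ^ (q + 1) = 1" using n1 n0 am1 b_nz by (simp add: power_divide)
    show "even d \<and> j1 = d div 2 \<and> a ^ (q - 1) = -1 \<and> (1 - a) / b \<in> mu q \<and>
        ((1 + a) / (1 - a)) ^ (q + 1) = 1 \<and>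
        (\<forall>(u::int) (v::int) (\<pi>::nat \<Rightarrow> int).
            ((1 - a) / b) ^ N = e powi u \<longrightarrow>
            ((1 + a) / (1 - a)) ^ N = e powi v \<longrightarrow>
            (\<forall>k<d. lam k ^ N = e powi \<pi> k) \<longrightarrow>
            (\<forall>k<d. \<forall>r::int.
               (\<pi> k + (r - int i2) * int k) mod int d
                = ((- int j2 * int N + r - int i2) * int k + (if even k then 0 else 1) * v + u)
                  mod int d))"
    proof (intro conjI allI impI)
      show "even d" "j1 = d div 2" using dj by simp_all
      show "a ^ (q - 1) = -1" by (rule aq1)
      show "(1 - a) / b \<in> mu q" by (rule mu1)
      show "((1 + a) / (1 - a)) ^ (q + 1) = 1" by (rule mu2)
      fix u v :: int and \<pi> :: "nat \<Rightarrow> int" and k :: nat and r :: int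
      assume hu: "((1 - a) / b) ^ N = e powi u" and hv: "((1 + a) / (1 - a)) ^ N = e powi v"
        and hp: "\<forall>k<d. lam k ^ N = e powi \<pi> k" and kd: "k < d"
      define \<delta> :: int where "\<delta> = (if even k then 0 else 1)"
      have Ek: "e ^ (j1 * k) = (- 1) ^ k" using tm1 by (simp add: t_def power_mult)
      have lk: "lam k = (1 + a * e ^ (j1 * k)) ^ q / (b * e ^ (j2 * k))"
        using part1 H kd by blast
      have m1q: "(- 1 :: 'a) ^ q = - 1" using negq[of 1] by simp
      have Cq: "(1 + a * e ^ (j1 * k)) ^ q = (if even k then 1 - a else 1 + a)"
        by (simp add: Ek frob power_mult_distrib Aa m1q flip: power_mult) (simp add: power_mult mult.commute m1q)
      have "((if even k then 1 - a else 1 + a) / b) ^ N = e powi (\<delta> * v + u)"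
      proof (cases "even k")
        case True thus ?thesis using hu by (simp add: \<delta>_def)
      next
        case False
        have "(1 + a) / b = (1 + a) / (1 - a) * ((1 - a) / b)" using am1 by simp
        hence "((1 + a) / b) ^ N = ((1 + a) / (1 - a)) ^ N * ((1 - a) / b) ^ N" by (metis power_mult_distrib)
        hence "((1 + a) / b) ^ N = e powi v * e powi u" using hu hv by simp
        thus ?thesis using False e0 by (simp add: \<delta>_def power_int_add)
      qed
      moreover have "lam k = ((if even k then 1 - a else 1 + a) / b) / e ^ (j2 * k)"
        using lk Cq by simp
      hence "lam k ^ N = ((if even k then 1 - a else 1 + a) / b) ^ N / (e ^ (j2 * k)) ^ N"
        by (simp only: power_divide)
      moreover have "(e ^ (j2 * k)) ^ N = e powi int (j2 * k * N)"
        by (simp only: power_int_of_nat power_mult)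
      ultimately have "lam k ^ N = e powi (\<delta> * v + u) / e powi int (j2 * k * N)"
        by simp
      hence "e powi \<pi> k = e powi (\<delta> * v + u - int (j2 * k * N))"
        using hp kd e0 by (simp add: power_int_diff)
      hence "\<pi> k mod int d = (\<delta> * v + u - int (j2 * k * N)) mod int d"
        by (rule powi_eq_mod[OF e_ord])
      hence "(\<pi> k + (r - int i2) * int k) mod int d =
             ((\<delta> * v + u - int (j2 * k * N)) + (r - int i2) * int k) mod int d"
        by (rule mod_add_cong) simp
      also have "(\<delta> * v + u - int (j2 * k * N)) + (r - int i2) * int k =
                 (- int j2 * int N + r - int i2) * int k + \<delta> * v + u"
        by (simp add: algebra_simps)
      finally show "(\<pi> k + (r - int i2) * int k) mod int d
                = ((- int j2 * int N + r - int i2) * int k + (if even k then 0 else 1) * v + u) mod int d"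
        by (simp add: \<delta>_def)
    qed
  qed
qed
qed

end
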